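(* $$\zeta(3)=\frac{4\pi^2}{21}\log\left(\frac{e^{\frac{4G}{\pi}}\,\mathcal C_3\left(\frac14\right)^{16}}{\sqrt2}\right).$$
   Context: $\zeta$ is the Riemann zeta function and $G=\sum_{n\ge0}\frac{(-1)^n}{(2n+1)^2}$ is Catalan's constant. $\mathcal C_3(x)=\prod_{n\ge1,\ n\text{ odd}}\left\{\left(1-\frac{x^2}{(n/2)^2}\right)^{(n/2)^2}e^{x^2}\right\}$ for real $|x|<\tfrac12$ (the order-3 Kurokawa–Koyama multiple cosine function; the product converges to a positive number). *)

theory Defs
  imports "HOL-Analysis.Analysis"
begin

definition zeta :: "real \<Rightarrow> real" where
  "zeta s = (\<Sum>n. 1 / (real (Suc n)) powr s)"

definition catalan :: real where
  "catalan = (\<Sum>n. (-1) ^ n / (2 * real n + 1) ^ 2)"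

definition multicos3 :: "real \<Rightarrow> real" where
  "multicos3 x = (\<Prod>k. (1 - x^2 / ((2 * real k + 1) / 2)^2) powr (((2 * real k + 1) / 2)^2)
                        * exp (x^2))"

end

theory Submission
  imports Defs
begin


lemma odd_prod_split:
  fixes t :: real
  shows "(\<Prod>k=1..2*N. 1 - (2*t)^2 / (real k)^2) =
         (\<Prod>k=1..N. 1 - t^2 / (real k)^2) * (\<Prod>j<N. 1 - 4*t^2 / (2*real j + 1)^2)"
proof (induction N)
  case 0 then show ?case by simp
next
  case (Suc N)
  have e: "{1..2*Suc N} = insert (2*N+2) (insert (2*N+1) {1..2*N})" by auto
  have "(\<Prod>k=1..2*Suc N. 1 - (2*t)^2 / (real k)^2) =
     (1 - (2*t)^2 / (real (2*N+2))^2) * ((1 - (2*t)^2 / (real (2*N+1))^2) * (\<Prod>k=1..2*N. 1 - (2*t)^2 / (real k)^2))"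
    unfolding e by (subst prod.insert, simp, simp)+ simp
  also have "(1 - (2*t)^2 / (real (2*N+2))^2) = 1 - t^2 / (real (Suc N))^2"
  proof -
    have "real (2*N+2) = 2 * real (Suc N)" by simp
    then show ?thesis by (simp only: power_mult_distrib) simp
  qed
  also have "(1 - (2*t)^2 / (real (2*N+1))^2) = 1 - 4*t^2 / (2*real N + 1)^2"
    by (simp add: power2_eq_square algebra_simps)
  also note Suc.IH
  also have "(\<Prod>k=1..Suc N. 1 - t^2 / (real k)^2) = (\<Prod>k=1..N. 1 - t^2 / (real k)^2) * (1 - t^2 / (real (Suc N))^2)"
    by (simp add: prod.cl_ivl_Suc)
  moreover have "(\<Prod>j<Suc N. 1 - 4*t^2 / (2*real j + 1)^2) = (\<Prod>j<N. 1 - 4*t^2 / (2*real j + 1)^2) * (1 - 4*t^2 / (2*real N + 1)^2)"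
    by simp
  ultimately show ?case by (simp only: mult_ac)
qed

lemma cos_sums:
  fixes t :: real
  assumes t: "0 \<le> t" "t < 1/2"
  shows "(\<lambda>j. ln (1 - 4*t^2 / (2*real j + 1)^2)) sums ln (cos (pi*t))"
proof (cases "t = 0")
  case True then show ?thesis by simp
next
  case False
  hence tp: "t > 0" using t by simp
  define P where "P = (\<lambda>x::real. \<lambda>n. \<Prod>k=1..n. 1 - x^2 / (real k)^2)"
  define Q where "Q = (\<lambda>n. \<Prod>j<n. 1 - 4*t^2 / (2*real j + 1)^2)"
  have pos: "1 - x^2/(real k)^2 > 0" if "0 \<le> x" "x < 1" "k \<ge> 1" for x k
  proof -
    have "x^2 < 1" using that by (simp add: abs_square_less_1)
    also have "1 \<le> (real k)^2" using that by simp
    finally have "x^2 < (real k)^2" .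
    then have "x^2/(real k)^2 < 1" using that by (simp add: divide_less_eq)
    then show ?thesis by simp
  qed
  have Ppos: "P t n > 0" for n unfolding P_def
    using pos[of t] t by (intro prod_pos) auto
  have fpos: "1 - 4*t^2 / (2*real j + 1)^2 > 0" for j
  proof -
    have "(2*t)^2 < 1^2" using t tp by (intro power_strict_mono) auto
    hence "4*t^2 < 1" by (simp add: power_mult_distrib)
    also have "1 \<le> (2*real j + 1)^2" by simp
    finally have "4*t^2 < (2*real j + 1)^2" .
    then have "4*t^2 / (2*real j + 1)^2 < 1" by (simp add: divide_less_eq)
    then show ?thesis by simp
  qed
  have fne: "1 - 4*t^2 / (2*real j + 1)^2 \<noteq> 0" for j using fpos[of j] by linarith
  have s1: "P (2*t) \<longlonglongrightarrow> sin (pi*(2*t)) / (pi*(2*t))"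
    unfolding P_def using sin_product_formula_real'[of "2*t"] tp by simp
  have s2: "(P (2*t) \<circ> (\<lambda>n. 2*n)) \<longlonglongrightarrow> sin (pi*(2*t)) / (pi*(2*t))"
    by (rule LIMSEQ_subseq_LIMSEQ[OF s1]) (auto simp: strict_mono_def)
  have s3: "P t \<longlonglongrightarrow> sin (pi*t) / (pi*t)"
    unfolding P_def using sin_product_formula_real'[of t] tp by simp
  have sinpos: "sin (pi*t) > 0" using t tp by (intro sin_gt_zero) auto
  have lim: "(\<lambda>n. (P (2*t) \<circ> (\<lambda>n. 2*n)) n / P t n) \<longlonglongrightarrow>
       (sin (pi*(2*t)) / (pi*(2*t))) / (sin (pi*t) / (pi*t))"
    using sinpos tp by (intro tendsto_divide s2 s3) auto
  have sd: "sin (pi * (2 * t)) = 2 * sin (pi * t) * cos (pi * t)"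
    using sin_double[of "pi*t"] by (simp add: mult_ac)
  have eq: "(sin (pi*(2*t)) / (pi*(2*t))) / (sin (pi*t) / (pi*t)) = cos (pi*t)"
    unfolding sd using sinpos tp by (simp add: field_simps)
  have ps: "P (2*t) (2*n) = P t n * Q n" for n
    unfolding P_def Q_def by (rule odd_prod_split)
  have eq2: "(P (2*t) \<circ> (\<lambda>n. 2*n)) n / P t n = Q n" for n
    using ps[of n] Ppos[of n] by simp
  have "pi * t < pi * (1/2)" by (rule mult_strict_left_mono) (use t in auto)
  moreover have "0 \<le> pi * t" using t by simp
  ultimately have cpos: "cos (pi*t) > 0" using pi_gt_zero by (intro cos_gt_zero_pi) linarith+
  have "(\<lambda>n. ln (Q n)) \<longlonglongrightarrow> ln (cos (pi*t))"
    using lim unfolding eq eq2 using cpos by (intro tendsto_ln) auto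
  moreover have "ln (Q n) = (\<Sum>j<n. ln (1 - 4*t^2 / (2*real j + 1)^2))" for n
    unfolding Q_def apply (rule ln_prod) apply simp using fne by blast
  ultimately show ?thesis unfolding sums_def by simp
qed

definition AA :: "nat \<Rightarrow> real" where "AA k = ((2*real k + 1)/2)^2"

lemma AA_ge: "AA k \<ge> 1/4"
proof -
  have "(1/2::real) \<le> (2*real k + 1)/2" by simp
  hence "(1/2::real)^2 \<le> ((2*real k + 1)/2)^2" by (intro power_mono) auto
  thus ?thesis by (simp add: AA_def power2_eq_square)
qed

lemma AA_eq: "t^2 / AA j = 4*t^2/(2*real j+1)^2"
  by (simp add: AA_def power_divide)

lemma ln_bound:
  fixes u :: real
  assumes "0 \<le> u" "u \<le> 1/2"
  shows "\<bar>ln (1 - u)\<bar> \<le> 2*u"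
proof -
  have p: "0 < 1 - u" using assms by simp
  have "ln (1 - u) \<le> 0" using assms by simp
  moreover have "ln (1/(1-u)) \<le> 1/(1-u) - 1" using p by (intro ln_le_minus_one) simp
  moreover have "ln (1/(1-u)) = - ln (1-u)" using p by (simp add: ln_div)
  moreover have "1/(1-u) - 1 = u/(1-u)" using p by (simp add: field_simps)
  moreover have "u/(1-u) \<le> 2*u"
  proof -
    have "0 \<le> u*(1 - 2*u)" using assms by simp
    hence "u \<le> 2*u*(1-u)" by (simp add: algebra_simps)
    thus ?thesis using p by (simp add: divide_le_eq mult_ac)
  qed
  ultimately show ?thesis by linarith
qed

lemma small_u:
  assumes "0 \<le> t" "t \<le> 1/4"
  shows "t^2 / AA k \<le> 1/4 * inverse (real (Suc k))^2" "0 \<le> t^2 / AA k" "t^2 / AA k \<le> 1/4"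
proof -
  have "t^2 \<le> (1/4)^2" using assms by (intro power_mono) auto
  have sq: "(real (Suc k))^2 \<le> (2*real k+1)^2" by (intro power_mono) auto
  have "t^2 / AA k = 4*t^2/(2*real k+1)^2" by (rule AA_eq)
  also have "\<dots> \<le> 4*(1/4)^2/(2*real k+1)^2"
    using \<open>t^2 \<le> _\<close> by (intro divide_right_mono) auto
  also have "\<dots> \<le> 4*(1/4)^2/(real (Suc k))^2"
    using sq by (intro divide_left_mono) auto
  also have "\<dots> = 1/4 * inverse (real (Suc k))^2" by (simp add: field_simps)
  finally show "t^2 / AA k \<le> 1/4 * inverse (real (Suc k))^2" .
  also have "inverse (real (Suc k)) \<le> 1" by (simp add: inverse_le_1_iff)
  hence "inverse (real (Suc k))^2 \<le> 1" by (intro power_le_one) auto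
  hence "1/4 * inverse (real (Suc k))^2 \<le> 1/4 * 1" by (intro mult_left_mono) auto
  finally show "t^2 / AA k \<le> 1/4" by simp
  show "0 \<le> t^2 / AA k" using AA_ge[of k] by simp
qed

lemma term_bound:
  assumes "0 \<le> t" "t \<le> 1/4"
  shows "\<bar>t * ln (1 - t^2 / AA k)\<bar> \<le> inverse (real (Suc k))^2"
proof -
  note s = small_u[OF assms, of k]
  have "\<bar>ln (1 - t^2 / AA k)\<bar> \<le> 2 * (t^2 / AA k)" apply (rule ln_bound) using s(2,3) by linarith+
  also have "\<dots> \<le> 2 * (1/4 * inverse (real (Suc k))^2)" using s(1) by linarith
  finally have "\<bar>ln (1 - t^2 / AA k)\<bar> \<le> 1/2 * inverse (real (Suc k))^2" by simp
  hence "\<bar>t\<bar> * \<bar>ln (1 - t^2 / AA k)\<bar> \<le> 1 * (1/2 * inverse (real (Suc k))^2)"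
    using assms by (intro mult_mono) auto
  moreover have "0 \<le> \<bar>t\<bar> * \<bar>ln (1 - t^2 / AA k)\<bar>" by simp
  ultimately show ?thesis unfolding abs_mult by linarith
qed

lemma h_sums:
  assumes "0 \<le> t" "t \<le> 1/4"
  shows "(\<lambda>k. ln (1 - t^2 / AA k)) sums ln (cos (pi*t))"
  using cos_sums[of t] assms by (simp add: AA_eq)

lemma Phi_deriv:
  assumes "t^2 < AA k"
  shows "((\<lambda>t. ((t^2 - AA k) * ln (1 - t^2 / AA k) - t^2)/2) has_real_derivative
           t * ln (1 - t^2 / AA k)) (at t)"
proof -
  have A: "AA k > 0" using AA_ge[of k] by simp
  have p: "1 - t^2 / AA k > 0" using assms A by (simp add: field_simps)
  have d1: "((\<lambda>t. 1 - t^2 / AA k) has_real_derivative (-(2*t)/AA k)) (at t)"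
    using A by (auto intro!: derivative_eq_intros)
  have d2: "((\<lambda>t. ln (1 - t^2 / AA k)) has_real_derivative (1/(1 - t^2 / AA k)) * (-(2*t)/AA k)) (at t)"
    by (rule DERIV_chain2[OF DERIV_ln_divide[OF p] d1])
  have d3: "((\<lambda>t. t^2 - AA k) has_real_derivative 2*t) (at t)"
    by (auto intro!: derivative_eq_intros)
  have d4: "((\<lambda>t. t^2) has_real_derivative 2*t) (at t)"
    by (auto intro!: derivative_eq_intros)
  have d5: "((\<lambda>t. ((t^2 - AA k) * ln (1 - t^2 / AA k) - t^2)/2) has_real_derivative
     ((t^2 - AA k) * ((1/(1 - t^2 / AA k)) * (-(2*t)/AA k)) + (2*t) * ln (1 - t^2 / AA k) - 2*t)/2) (at t)"
    by (intro DERIV_cdivide DERIV_diff DERIV_mult' d2 d3 d4)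
  show ?thesis
    apply (rule DERIV_cong[OF d5])
    using A p assms by (simp add: field_simps)
qed


definition Phi :: "nat \<Rightarrow> real \<Rightarrow> real" where
  "Phi k t = ((t^2 - AA k) * ln (1 - t^2 / AA k) - t^2)/2"

lemma pos_on: assumes "t \<in> {0..1/4}" shows "1 - t^2 / AA k > 0"
proof -
  have "t^2 / AA k \<le> 1/4" using small_u(3)[of t k] assms by auto
  thus ?thesis by linarith
qed

lemma int_k: "((\<lambda>t. t * ln (1 - t^2 / AA k)) has_integral Phi k (1/4)) {0..1/4}"
proof -
  have "((\<lambda>t. t * ln (1 - t^2 / AA k)) has_integral (Phi k (1/4) - Phi k 0)) {0..1/4}"
  proof (rule fundamental_theorem_of_calculus)
    fix x :: real assume x: "x \<in> {0..1/4}"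
    have "x^2 / AA k < 1" using pos_on[OF x, of k] by linarith
    hence "x^2 < AA k" using AA_ge[of k] by (simp add: divide_less_eq)
    from Phi_deriv[OF this] show "(Phi k has_vector_derivative x * ln (1 - x^2 / AA k)) (at x within {0..1/4})"
      unfolding Phi_def[abs_def] has_real_derivative_iff_has_vector_derivative
      by (rule has_vector_derivative_at_within)
  qed simp
  moreover have "Phi k 0 = 0" by (simp add: Phi_def)
  ultimately show ?thesis by simp
qed

lemma summable_M: "summable (\<lambda>n. (inverse (real (Suc n)))^2)"
  using inverse_power_summable[of 2, where 'a=real]
  by (subst summable_Suc_iff) (simp add: power_inverse)

lemma J_sums:
  obtains J where "((\<lambda>t. t * ln (cos (pi*t))) has_integral J) {0..1/4}"
                  "(\<lambda>k. Phi k (1/4)) sums J"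
proof -
  let ?f = "\<lambda>k t. t * ln (1 - t^2 / AA k)"
  have ul: "uniform_limit {0..1/4} (\<lambda>n t. \<Sum>k<n. ?f k t) (\<lambda>t. \<Sum>k. ?f k t) sequentially"
  proof (rule Weierstrass_m_test[OF _ summable_M])
    fix n and x :: real assume "x \<in> {0..1/4}"
    thus "norm (?f n x) \<le> (inverse (real (Suc n)))^2" using term_bound[of x n] by simp
  qed
  have cont: "continuous_on {0..1/4} (\<lambda>t. \<Sum>k<n. ?f k t)" for n
  proof -
    have ne: "\<forall>t\<in>{0..1/4}. 1 - t^2/AA k \<noteq> 0" for k using pos_on[of _ k] by fastforce
    have ne2: "AA k \<noteq> 0" for k using AA_ge[of k] by simp
    show ?thesis by (intro continuous_intros ne ballI ne2)
  qed
  obtain I J where I: "\<And>n. ((\<lambda>t. \<Sum>k<n. ?f k t) has_integral I n) {0..1/4}"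
     and J: "((\<lambda>t. \<Sum>k. ?f k t) has_integral J) {0..1/4}" and IJ: "I \<longlonglongrightarrow> J"
    by (rule uniform_limit_integral[OF ul cont]) auto
  have Ieq: "I n = (\<Sum>k<n. Phi k (1/4))" for n
    using I[of n] has_integral_sum[of "{..<n}" ?f "\<lambda>k. Phi k (1/4)", OF _ int_k]
    by (auto dest: has_integral_unique)
  hence "I = (\<lambda>n. \<Sum>k<n. Phi k (1/4))" by (intro ext)
  with IJ have s: "(\<lambda>k. Phi k (1/4)) sums J" unfolding sums_def by simp
  have "(\<Sum>k. ?f k t) = t * ln (cos (pi*t))" if "t \<in> {0..1/4}" for t
    using sums_mult[OF h_sums[of t], of t] that by (auto simp: sums_iff)
  hence "((\<lambda>t. t * ln (cos (pi*t))) has_integral J) {0..1/4}"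
    using J has_integral_cong[of "{0..1/4}" "\<lambda>t. \<Sum>k. ?f k t" "\<lambda>t. t * ln (cos (pi*t))"] by simp
  with s that show ?thesis by blast
qed


lemma mc_factor:
  "(1 - (1/4)^2 / ((2 * real k + 1) / 2)^2) powr (((2 * real k + 1) / 2)^2) * exp ((1/4)^2)
     = exp (AA k * ln (1 - (1/4)^2 / AA k) + (1/4)^2)"
proof -
  have p: "1 - (1/4)^2 / AA k > 0" by (rule pos_on) simp
  have ne: "1 - (1/4)^2 / AA k \<noteq> 0" using p by linarith
  have "(1 - (1/4)^2 / AA k) powr (AA k) = exp (AA k * ln (1 - (1/4)^2 / AA k))"
    by (simp only: powr_def ne if_False)
  thus ?thesis unfolding AA_def[symmetric] by (simp add: exp_add)
qed

lemma mc_value: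
  assumes J: "(\<lambda>k. Phi k (1/4)) sums J"
  shows "multicos3 (1/4) = exp ((1/4)^2 * ln (cos (pi/4)) - 2*J)"
proof -
  have s: "(\<lambda>k. AA k * ln (1 - (1/4)^2 / AA k) + (1/4)^2) sums ((1/4)^2 * ln (cos (pi/4)) - 2*J)"
  proof -
    have "(\<lambda>k. (1/4)^2 * ln (1 - (1/4)^2 / AA k) - 2 * Phi k (1/4)) sums ((1/4)^2 * ln (cos (pi*(1/4))) - 2*J)"
      by (intro sums_diff sums_mult J h_sums) auto
    moreover have "(1/4)^2 * ln (1 - (1/4)^2 / AA k) - 2 * Phi k (1/4) = AA k * ln (1 - (1/4)^2 / AA k) + (1/4)^2" for k
      unfolding Phi_def by (simp add: field_simps)
    ultimately show ?thesis by simp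
  qed
  have "multicos3 (1/4) = prodinf (\<lambda>k. exp (AA k * ln (1 - (1/4)^2 / AA k) + (1/4)^2))"
    unfolding multicos3_def mc_factor ..
  also have "\<dots> = exp ((1/4)^2 * ln (cos (pi/4)) - 2*J)"
    using prodinf_exp[OF sums_summable[OF s]] sums_unique[OF s] by simp
  finally show ?thesis .
qed



definition cc :: "nat \<Rightarrow> real" where
  "cc k = sin (real k*pi/2)/(8*pi*real k) + (cos (real k*pi/2) - 1)/(4*pi^2*(real k)^2)"
definition bb :: "nat \<Rightarrow> real" where "bb k = - ((-1)^k) * cc k / real k"

lemma sc_shift: "sin (real (4*j+r)*pi/2) = sin (real r*pi/2)" "cos (real (4*j+r)*pi/2) = cos (real r*pi/2)"
proof -
  have e: "real (4*j+r)*pi/2 = real r*pi/2 + 2*real j*pi" by (simp add: field_simps)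
  show "sin (real (4*j+r)*pi/2) = sin (real r*pi/2)" unfolding e by (simp add: sin_add)
  show "cos (real (4*j+r)*pi/2) = cos (real r*pi/2)" unfolding e by (simp add: cos_add)
qed

lemma sc3: "sin (3*pi/2) = -1" "cos (3*pi/2) = 0"
proof -
  have e: "3*pi/2 = pi/2 + pi" by simp
  show "sin (3*pi/2) = -1" by (simp only: e sin_add sin_pi_half cos_pi_half sin_pi cos_pi)
  show "cos (3*pi/2) = 0" by (simp only: e cos_add sin_pi_half cos_pi_half sin_pi cos_pi)
qed

lemma alg1: "(x::real) > 0 \<Longrightarrow> (1/(8*pi*x) + (0-1)/(4*pi^2*x^2))/x = 1/(8*pi*x^2) - 1/(4*pi^2*x^3)"
  by (simp add: field_simps power2_eq_square power3_eq_cube)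
lemma alg2: "(x::real) > 0 \<Longrightarrow> -((0/(8*pi*(2*x)) + (-1-1)/(4*pi^2*(2*x)^2))/(2*x)) = 1/(16*pi^2*x^3)"
  by (simp add: field_simps power2_eq_square power3_eq_cube)
lemma alg3: "(x::real) > 0 \<Longrightarrow> ((-1)/(8*pi*x) + (0-1)/(4*pi^2*x^2))/x = - 1/(8*pi*x^2) - 1/(4*pi^2*x^3)"
  by (simp add: field_simps power2_eq_square power3_eq_cube)

lemma bb_vals:
  "bb (4*j) = 0"
  "bb (4*j+1) = 1/(8*pi*(4*real j+1)^2) - 1/(4*pi^2*(4*real j+1)^3)"
  "bb (4*j+2) = 1/(16*pi^2*(2*real j+1)^3)"
  "bb (4*j+3) = - 1/(8*pi*(4*real j+3)^2) - 1/(4*pi^2*(4*real j+3)^3)"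
proof -
  have s0: "sin (real (4*j)*pi/2) = 0" "cos (real (4*j)*pi/2) = 1"
    using sc_shift[of j 0] by simp_all
  show "bb (4*j) = 0" unfolding bb_def cc_def s0 by simp
  have s1: "sin (real (4*j+1)*pi/2) = 1" "cos (real (4*j+1)*pi/2) = 0"
    using sc_shift[of j 1] by simp_all
  have "bb (4*j+1) = (1/(8*pi*real (4*j+1)) + (0-1)/(4*pi^2*(real (4*j+1))^2))/real (4*j+1)"
    unfolding bb_def cc_def s1 by simp
  also have "\<dots> = 1/(8*pi*(real (4*j+1))^2) - 1/(4*pi^2*(real (4*j+1))^3)" by (rule alg1) simp
  finally show "bb (4*j+1) = 1/(8*pi*(4*real j+1)^2) - 1/(4*pi^2*(4*real j+1)^3)" by (simp add: add.commute)
  have s2: "sin (real (4*j+2)*pi/2) = 0" "cos (real (4*j+2)*pi/2) = -1"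
    using sc_shift[of j 2] by simp_all
  have e2: "real (4*j+2) = 2*(real (2*j+1))" by simp
  have "bb (4*j+2) = -((0/(8*pi*real (4*j+2)) + (-1-1)/(4*pi^2*(real (4*j+2))^2))/real (4*j+2))"
    unfolding bb_def cc_def s2 by simp
  also have "\<dots> = 1/(16*pi^2*(real (2*j+1))^3)" unfolding e2 by (rule alg2) simp
  finally show "bb (4*j+2) = 1/(16*pi^2*(2*real j+1)^3)" by (simp add: add.commute)
  have s3: "sin (real (4*j+3)*pi/2) = -1" "cos (real (4*j+3)*pi/2) = 0"
    using sc_shift[of j 3] sc3 by simp_all
  have "bb (4*j+3) = ((-1)/(8*pi*real (4*j+3)) + (0-1)/(4*pi^2*(real (4*j+3))^2))/real (4*j+3)"
    unfolding bb_def cc_def s3 by simp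
  also have "\<dots> = - 1/(8*pi*(real (4*j+3))^2) - 1/(4*pi^2*(real (4*j+3))^3)" by (rule alg3) simp
  finally show "bb (4*j+3) = - 1/(8*pi*(4*real j+3)^2) - 1/(4*pi^2*(4*real j+3)^3)" by (simp add: add.commute)
qed


lemma bb_bound: "\<bar>bb k\<bar> \<le> 2 * inverse ((real k)^2)"
proof (cases "k = 0")
  case True then show ?thesis by (simp add: bb_def)
next
  case False
  define x where "x = real k"
  have x: "x \<ge> 1" using False by (simp add: x_def)
  define s where "s = sin (real k*pi/2)"
  define c where "c = cos (real k*pi/2)"
  have s: "\<bar>s\<bar> \<le> 1" unfolding s_def by simp
  have c: "\<bar>c - 1\<bar> \<le> 2" unfolding c_def using abs_cos_le_one[of "real k*pi/2"] by linarith
  have pi1: "pi \<ge> 1" using pi_gt3 by simp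
  have x2: "x^2 > 0" using x by simp
  have "bb k = - ((-1)^k) * (s/(8*pi*x^2) + (c-1)/(4*pi^2*x^3))"
    unfolding bb_def cc_def s_def c_def x_def using False
    by (simp add: field_simps power2_eq_square power3_eq_cube)
  hence "\<bar>bb k\<bar> = \<bar>s/(8*pi*x^2) + (c-1)/(4*pi^2*x^3)\<bar>" by (simp add: abs_mult)
  also have "\<dots> \<le> \<bar>s/(8*pi*x^2)\<bar> + \<bar>(c-1)/(4*pi^2*x^3)\<bar>" by (rule abs_triangle_ineq)
  also have "\<bar>s/(8*pi*x^2)\<bar> = \<bar>s\<bar>/(8*pi*x^2)" by (simp add: abs_divide)
  also have "\<bar>(c-1)/(4*pi^2*x^3)\<bar> = \<bar>c-1\<bar>/(4*pi^2*x^3)" using x by (simp add: abs_divide abs_mult)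
  also have "\<bar>s\<bar>/(8*pi*x^2) \<le> 1/(x^2)"
  proof (rule frac_le)
    have "1*x^2 \<le> (8*pi)*x^2" by (rule mult_right_mono) (use pi1 x2 in auto)
    thus "x^2 \<le> 8*pi*x^2" by simp
  qed (use s x2 in auto)
  also have "\<bar>c-1\<bar>/(4*pi^2*x^3) \<le> 2/(2*x^2)"
  proof (rule frac_le)
    have "x^2 \<le> x^3" using x by (simp add: power_increasing)
    moreover have "1 \<le> pi^2" using pi1 by (rule one_le_power)
    hence "2 \<le> 4*pi^2" by simp
    ultimately show "2*x^2 \<le> 4*pi^2*x^3" by (intro mult_mono) auto
  qed (use c x2 in auto)
  finally show ?thesis by (simp add: x_def inverse_eq_divide)
qed

lemma bb_summable: "summable (\<lambda>k. \<bar>bb k\<bar>)"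
  by (rule summable_comparison_test'[where g="\<lambda>k. 2 * inverse ((real k)^2)"])
     (auto intro!: summable_mult inverse_power_summable simp: bb_bound)


lemma set2: "{m..<m+2} = {m, Suc m}" for m :: nat by auto
lemma set4: "{m..<m+4} = {m, Suc m, Suc (Suc m), Suc (Suc (Suc m))}" for m :: nat by auto

lemma zeta_sums: "(\<lambda>n. 1/(real (Suc n))^3) sums zeta 3"
proof -
  have e: "(\<lambda>n. 1/(real (Suc n)) powr 3) = (\<lambda>n. 1/(real (Suc n))^3)"
    by (intro ext) simp
  have "summable (\<lambda>n. 1/(real (Suc n))^3)"
    using inverse_power_summable[of 3, where 'a=real]
    by (subst summable_Suc_iff) (simp add: inverse_eq_divide)
  thus ?thesis unfolding zeta_def e by (simp add: summable_sums)
qed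

lemma odd_sums: "(\<lambda>j. 1/(2*real j+1)^3) sums (7/8 * zeta 3)"
proof -
  have g: "(\<lambda>j. \<Sum>n\<in>{j*2..<j*2+2}. 1/(real (Suc n))^3) sums zeta 3"
    by (rule sums_group[OF zeta_sums]) simp
  have e: "(\<Sum>n\<in>{j*2..<j*2+2}. 1/(real (Suc n))^3) = 1/(2*real j+1)^3 + 1/8 * (1/(real (Suc j))^3)" for j
  proof -
    have "1/(real (Suc (Suc (j*2))))^3 = 1/8 * (1/(real (Suc j))^3)"
    proof -
      have "real (Suc (Suc (j*2))) = 2 * real (Suc j)" by simp
      then show ?thesis by (simp only: power_mult_distrib) simp
    qed
    moreover have "1/(real (Suc (j*2)))^3 = 1/(2*real j+1)^3" by (simp add: algebra_simps)
    ultimately show ?thesis unfolding set2 by simp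
  qed
  have "(\<lambda>j. 1/8 * (1/(real (Suc j))^3)) sums (1/8 * zeta 3)"
    by (rule sums_mult[OF zeta_sums])
  from sums_diff[OF g[unfolded e] this] show ?thesis by simp
qed

lemma odd_grp: "(\<lambda>j. 1/(4*real j+1)^3 + 1/(4*real j+3)^3) sums (7/8 * zeta 3)"
proof -
  have g: "(\<lambda>j. \<Sum>n\<in>{j*2..<j*2+2}. 1/(2*real n+1)^3) sums (7/8 * zeta 3)"
    by (rule sums_group[OF odd_sums]) simp
  have "(\<Sum>n\<in>{j*2..<j*2+2}. 1/(2*real n+1)^3) = 1/(4*real j+1)^3 + 1/(4*real j+3)^3" for j
    unfolding set2 by (simp add: algebra_simps)
  with g show ?thesis by simp
qed

lemma cat_grp: "(\<lambda>j. 1/(4*real j+1)^2 - 1/(4*real j+3)^2) sums catalan"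
proof -
  have sm: "summable (\<lambda>n. (-1::real) ^ n / (2 * real n + 1) ^ 2)"
  proof (rule summable_comparison_test'[where g="\<lambda>n. (inverse (real (Suc n)))^2"])
    show "summable (\<lambda>n. (inverse (real (Suc n)))^2)"
      using inverse_power_summable[of 2, where 'a=real]
      by (subst summable_Suc_iff) (simp add: power_inverse)
    fix n :: nat
    have "(real (Suc n))^2 \<le> (2 * real n + 1)^2" by (intro power_mono) auto
    hence "1/(2 * real n + 1)^2 \<le> 1/(real (Suc n))^2" by (intro divide_left_mono) auto
    thus "norm ((-1::real) ^ n / (2 * real n + 1) ^ 2) \<le> (inverse (real (Suc n)))^2"
      by (simp add: abs_divide power_inverse inverse_eq_divide power_one_over)
  qed
  have g: "(\<lambda>j. \<Sum>n\<in>{j*2..<j*2+2}. (-1::real) ^ n / (2 * real n + 1) ^ 2) sums catalan"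
    unfolding catalan_def by (rule sums_group[OF summable_sums[OF sm]]) simp
  have ej: "(\<Sum>n\<in>{j*2..<j*2+2}. (-1::real) ^ n / (2 * real n + 1) ^ 2) = 1/(4*real j+1)^2 - 1/(4*real j+3)^2" for j
    unfolding set2 by (simp add: algebra_simps)
  show ?thesis using g unfolding ej .
qed

lemma alg4: "0 + (1/(8*pi*(a)^2) - 1/(4*pi^2*(a)^3)) + 1/(16*pi^2*(e)^3)
   + (- 1/(8*pi*(b)^2) - 1/(4*pi^2*(b)^3)) =
     1/(8*pi) * (1/(a)^2 - 1/(b)^2)
     - 1/(4*pi^2) * (1/(a)^3 + 1/(b)^3)
     + 1/(16*pi^2) * (1/(e::real)^3)"
  by (simp add: algebra_simps)

lemma bb_sums: "bb sums (catalan/(8*pi) - 21 * zeta 3/(128*pi^2))"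
proof -
  have sb: "summable bb" using bb_summable by (rule summable_rabs_cancel)
  have g: "(\<lambda>j. \<Sum>k\<in>{j*4..<j*4+4}. bb k) sums suminf bb"
    by (rule sums_group[OF summable_sums[OF sb]]) simp
  have e4: "(\<Sum>k\<in>{j*4..<j*4+4}. bb k) = bb (4*j) + bb (4*j+1) + bb (4*j+2) + bb (4*j+3)" for j
    unfolding set4 by (simp add: numeral_3_eq_3 numeral_2_eq_2 mult.commute)
  have e: "(\<Sum>k\<in>{j*4..<j*4+4}. bb k) =
     1/(8*pi) * (1/(4*real j+1)^2 - 1/(4*real j+3)^2)
     - 1/(4*pi^2) * (1/(4*real j+1)^3 + 1/(4*real j+3)^3)
     + 1/(16*pi^2) * (1/(2*real j+1)^3)" for j
    unfolding e4 bb_vals by (rule alg4)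
  have s2: "(\<lambda>j. 1/(8*pi) * (1/(4*real j+1)^2 - 1/(4*real j+3)^2)
     - 1/(4*pi^2) * (1/(4*real j+1)^3 + 1/(4*real j+3)^3)
     + 1/(16*pi^2) * (1/(2*real j+1)^3)) sums
     (1/(8*pi) * catalan - 1/(4*pi^2) * (7/8 * zeta 3) + 1/(16*pi^2) * (7/8 * zeta 3))"
    by (intro sums_add sums_diff sums_mult cat_grp odd_grp odd_sums)
  have "suminf bb = 1/(8*pi) * catalan - 1/(4*pi^2) * (7/8 * zeta 3) + 1/(16*pi^2) * (7/8 * zeta 3)"
    using sums_unique2[OF g[unfolded e] s2] .
  also have "\<dots> = catalan/(8*pi) - 21 * zeta 3/(128*pi^2)" by (simp add: field_simps)
  finally show ?thesis using summable_sums[OF sb] by simp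
qed


lemma fourier_r:
  fixes r t :: real
  assumes r: "0 \<le> r" "r < 1"
  shows "(\<lambda>k. - ((-r)^k) * cos (2*pi*real k*t) / real k) sums (ln (1 + 2*r*cos (2*pi*t) + r^2) / 2)"
proof -
  define z where "z = complex_of_real r * cis (2*pi*t)"
  have nz: "norm z < 1" using r by (simp add: z_def norm_mult)
  have s: "(\<lambda>n. Re (- ((-z)^n) / of_nat n)) sums Re (ln (1 + z))"
    by (rule sums_Re[OF Ln_series'[OF nz]])
  have trm: "Re (- ((-z)^n) / of_nat n) = - ((-r)^n) * cos (2*pi*real n*t) / real n" for n
  proof -
    have mz: "-z = complex_of_real (-r) * cis (2*pi*t)" by (simp add: z_def)
    have "(-z)^n = (complex_of_real (-r))^n * (cis (2*pi*t))^n"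
      by (simp only: mz power_mult_distrib)
    also have "\<dots> = complex_of_real ((-r)^n) * cis (real n * (2*pi*t))"
      by (simp only: Complex.DeMoivre of_real_power)
    finally have "(-z)^n = complex_of_real ((-r)^n) * cis (real n * (2*pi*t))" .
    thus ?thesis by (simp add: mult_ac)
  qed
  have ne: "1 + z \<noteq> 0"
  proof
    assume "1 + z = 0" hence "z = -1" by (simp add: add_eq_0_iff)
    with nz show False by simp
  qed
  have n2: "(cmod (1 + z))^2 = 1 + 2*r*cos (2*pi*t) + r^2"
  proof -
    have "(cmod (1 + z))^2 = (1 + r * cos (2*pi*t))^2 + (r * sin (2*pi*t))^2"
      unfolding cmod_power2 z_def by simp
    also have "\<dots> = 1 + 2*r*cos (2*pi*t) + r^2 * ((sin (2*pi*t))^2 + (cos (2*pi*t))^2)"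
    proof -
      have "(1 + r*a)^2 + (r*b)^2 = 1 + 2*r*a + r^2*(b^2+a^2)" for a b :: real
        by (simp add: power2_eq_square algebra_simps)
      thus ?thesis .
    qed
    finally show ?thesis by (simp only: sin_cos_squared_add mult_1_right)
  qed
  have "Re (ln (1 + z)) = ln (cmod (1 + z))" using ne by simp
  also have "\<dots> = ln ((cmod (1 + z))^2) / 2" by (simp add: ln_realpow)
  finally have "Re (ln (1 + z)) = ln (1 + 2*r*cos (2*pi*t) + r^2) / 2" unfolding n2 .
  with s show ?thesis unfolding trm by simp
qed

lemma int_cos:
  assumes k: "k \<ge> 1"
  shows "((\<lambda>t. t * cos (2*pi*real k*t)) has_integral cc k) {0..1/4}"
proof -
  define w where "w = 2*pi*real k"
  have w: "w > 0" using k by (simp add: w_def)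
  define F where "F t = t * sin (w*t)/w + cos (w*t)/w^2" for t
  have "((\<lambda>t. t * cos (w*t)) has_integral (F (1/4) - F 0)) {0..1/4}"
  proof (rule fundamental_theorem_of_calculus)
    fix x :: real assume "x \<in> {0..1/4}"
    have "(F has_real_derivative x * cos (w*x)) (at x)"
      unfolding F_def[abs_def] using w
      by (auto intro!: derivative_eq_intros simp: field_simps power2_eq_square)
    thus "(F has_vector_derivative x * cos (w*x)) (at x within {0..1/4})"
      unfolding has_real_derivative_iff_has_vector_derivative
      by (rule has_vector_derivative_at_within)
  qed simp
  moreover have "F (1/4) - F 0 = cc k"
  proof -
    have e: "w * (1/4) = real k * pi / 2" by (simp add: w_def)
    have kp: "real k > 0" using k by simp
    show ?thesis unfolding F_def cc_def e using w kp pi_gt_zero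
      by (simp add: w_def field_simps power2_eq_square)
  qed
  ultimately show ?thesis by (simp add: w_def)
qed


lemma int_term:
  fixes r :: real
  shows "((\<lambda>t. t * (- ((-r)^k) / real k * cos (2*pi*real k*t))) has_integral (r^k * bb k)) {0..1/4}"
proof (cases "k = 0")
  case True then show ?thesis by (simp add: bb_def)
next
  case False
  have "((\<lambda>t. (- ((-r)^k) / real k) * (t * cos (2*pi*real k*t))) has_integral
          (- ((-r)^k) / real k) * cc k) {0..1/4}"
    using False by (intro has_integral_mult_right int_cos) simp
  moreover have "(- ((-r)^k) / real k) * cc k = r^k * bb k"
  proof -
    have pm: "(-r)^k = (-1)^k * r^k" by (rule power_minus)
    show ?thesis unfolding bb_def pm by simp
  qed
  ultimately show ?thesis by (simp add: mult_ac)
qed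

lemma term_le:
  fixes r t :: real
  assumes "0 \<le> r" "t \<in> {0..1/4}"
  shows "norm (t * (- ((-r)^k) / real k * cos (2*pi*real k*t))) \<le> r^k"
proof (cases "k = 0")
  case True then show ?thesis by simp
next
  case False
  have "norm (t * (- ((-r)^k) / real k * cos (2*pi*real k*t))) = \<bar>t\<bar> * (r^k / real k) * \<bar>cos (2*pi*real k*t)\<bar>"
    using assms by (simp add: abs_mult power_abs abs_divide)
  also have "\<dots> \<le> 1 * (r^k / 1) * 1"
    using assms False by (intro mult_mono divide_left_mono) auto
  finally show ?thesis by simp
qed

lemma K_r:
  fixes r :: real
  assumes r: "0 \<le> r" "r < 1"
  obtains K where "((\<lambda>t. t * (ln (1 + 2*r*cos (2*pi*t) + r^2) / 2)) has_integral K) {0..1/4}"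
                  "(\<lambda>k. r^k * bb k) sums K"
proof -
  let ?f = "\<lambda>k t. t * (- ((-r)^k) / real k * cos (2*pi*real k*t))"
  have ul: "uniform_limit {0..1/4} (\<lambda>n t. \<Sum>k<n. ?f k t) (\<lambda>t. \<Sum>k. ?f k t) sequentially"
  proof (rule Weierstrass_m_test)
    show "summable (\<lambda>k. r^k)" using r by (intro summable_geometric) simp
  qed (use term_le r in auto)
  have cont: "continuous_on {0..1/4} (\<lambda>t. \<Sum>k<n. ?f k t)" for n
    by (intro continuous_intros)
  obtain I K where I: "\<And>n. ((\<lambda>t. \<Sum>k<n. ?f k t) has_integral I n) {0..1/4}"
     and K: "((\<lambda>t. \<Sum>k. ?f k t) has_integral K) {0..1/4}" and IK: "I \<longlonglongrightarrow> K"
    by (rule uniform_limit_integral[OF ul cont]) auto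
  have Ieq: "I n = (\<Sum>k<n. r^k * bb k)" for n
    using I[of n] has_integral_sum[of "{..<n}" ?f "\<lambda>k. r^k * bb k", OF _ int_term]
    by (auto dest: has_integral_unique)
  hence "I = (\<lambda>n. \<Sum>k<n. r^k * bb k)" by (intro ext)
  with IK have s: "(\<lambda>k. r^k * bb k) sums K" unfolding sums_def by simp
  have "(\<Sum>k. ?f k t) = t * (ln (1 + 2*r*cos (2*pi*t) + r^2) / 2)" for t
  proof -
    have "(\<lambda>k. t * (- ((-r)^k) * cos (2*pi*real k*t) / real k)) sums (t * (ln (1 + 2*r*cos (2*pi*t) + r^2) / 2))"
      by (rule sums_mult[OF fourier_r[OF r]])
    moreover have "t * (- ((-r)^k) * cos (2*pi*real k*t) / real k) = ?f k t" for k
      by simp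
    ultimately show ?thesis by (simp add: sums_iff)
  qed
  hence "(\<lambda>t. \<Sum>k. ?f k t) = (\<lambda>t. t * (ln (1 + 2*r*cos (2*pi*t) + r^2) / 2))" by (intro ext)
  hence "((\<lambda>t. t * (ln (1 + 2*r*cos (2*pi*t) + r^2) / 2)) has_integral K) {0..1/4}"
    using K by simp
  with s that show ?thesis by blast
qed


lemma ln_lip:
  fixes a b :: real
  assumes "1 \<le> a" "a \<le> b"
  shows "ln b - ln a \<le> b - a"
proof -
  have "ln b - ln a = ln (b/a)" using assms by (simp add: ln_div)
  also have "\<dots> \<le> b/a - 1" using assms by (intro ln_le_minus_one) simp
  also have "\<dots> = (b - a)/a" using assms by (simp add: field_simps)
  also have "\<dots> \<le> (b - a)/1" using assms by (intro divide_left_mono) auto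
  finally show ?thesis by simp
qed

lemma unif_bound:
  fixes r t :: real
  assumes r: "0 \<le> r" "r \<le> 1" and t: "t \<in> {0..1/4}"
  shows "\<bar>t * (ln (1 + 2*r*cos (2*pi*t) + r^2) / 2) - t * (ln (2 + 2*cos (2*pi*t)) / 2)\<bar> \<le> 1 - r"
proof -
  define c where "c = cos (2*pi*t)"
  have "0 \<le> 2*pi*t" using t by simp
  moreover have "2*pi*t \<le> 2*pi*(1/4)" using t by (intro mult_left_mono) auto
  ultimately have c0: "0 \<le> c" unfolding c_def using pi_gt_zero by (intro cos_ge_zero) linarith+
  have c1: "c \<le> 1" unfolding c_def by simp
  define a where "a = 1 + 2*r*c + r^2"
  define b where "b = 2 + 2*c"
  have a1: "1 \<le> a" unfolding a_def using r c0 by simp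
  have rc: "r*c \<le> c" using r c0 by (simp add: mult_left_le_one_le)
  have r2: "r^2 \<le> 1" using r by (simp add: power_le_one)
  have ab: "a \<le> b" unfolding a_def b_def using rc r2 by linarith
  have "ln b - ln a \<le> b - a" by (rule ln_lip[OF a1 ab])
  also have "b - a = (1 - r) * (2*c + 1 + r)" unfolding a_def b_def by (simp add: algebra_simps power2_eq_square)
  also have "\<dots> \<le> (1 - r) * 4" using r c1 by (intro mult_left_mono) auto
  finally have d: "ln b - ln a \<le> (1 - r) * 4" .
  have d0: "0 \<le> ln b - ln a" using a1 ab by simp
  have eq: "t * (ln a / 2) - t * (ln b / 2) = - (t * ((ln b - ln a)/2))" by (simp add: field_simps)
  have "\<bar>t * (ln a / 2) - t * (ln b / 2)\<bar> = \<bar>t\<bar> * ((ln b - ln a)/2)"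
    unfolding eq using d0 by (simp add: abs_mult)
  also have "\<dots> \<le> (1/4) * (((1 - r) * 4)/2)"
  proof (rule mult_mono)
    show "(ln b - ln a)/2 \<le> ((1 - r) * 4)/2" using d by simp
  qed (use t d0 in auto)
  also have "\<dots> \<le> 1 - r" using r by simp
  finally show ?thesis unfolding a_def b_def c_def .
qed


lemma S_cont: "continuous_on {0..1} (\<lambda>r::real. \<Sum>k. r^k * bb k)"
proof (rule uniform_limit_theorem)
  show "uniform_limit {0..1} (\<lambda>n r. \<Sum>k<n. r^k * bb k) (\<lambda>r. \<Sum>k. r^k * bb k) sequentially"
  proof (rule Weierstrass_m_test[OF _ bb_summable])
    fix k and r :: real assume "r \<in> {0..1}"
    hence "\<bar>r^k\<bar> * \<bar>bb k\<bar> \<le> 1 * \<bar>bb k\<bar>" by (intro mult_right_mono) (auto simp: power_abs power_le_one)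
    thus "norm (r^k * bb k) \<le> \<bar>bb k\<bar>" by (simp add: abs_mult)
  qed
qed (intro always_eventually allI continuous_intros, simp)

lemma K1_value:
  "((\<lambda>t. t * (ln (2 + 2*cos (2*pi*t)) / 2)) has_integral suminf bb) {0..1/4}"
proof -
  define rr where "rr n = 1 - inverse (real (Suc n)) / 2" for n
  have rr0: "0 \<le> rr n" "rr n < 1" "rr n \<le> 1" for n
  proof -
    have "inverse (real (Suc n)) \<le> 1" by (simp add: inverse_le_1_iff)
    moreover have "0 < inverse (real (Suc n))" by simp
    ultimately show "0 \<le> rr n" "rr n < 1" "rr n \<le> 1" unfolding rr_def by linarith+
  qed
  have rrlim: "(\<lambda>n. 1 - rr n) \<longlonglongrightarrow> 0"
    unfolding rr_def using tendsto_divide_zero[OF LIMSEQ_inverse_real_of_nat, of 2] by simp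
  hence rr1: "rr \<longlonglongrightarrow> 1"
    using tendsto_diff[OF tendsto_const[of 1] rrlim] by simp
  have "\<forall>n. \<exists>K. ((\<lambda>t. t * (ln (1 + 2*rr n*cos (2*pi*t) + (rr n)^2) / 2)) has_integral K) {0..1/4}
                 \<and> (\<lambda>k. (rr n)^k * bb k) sums K"
  proof
    fix n
    obtain K where "((\<lambda>t. t * (ln (1 + 2*rr n*cos (2*pi*t) + (rr n)^2) / 2)) has_integral K) {0..1/4}"
                   "(\<lambda>k. (rr n)^k * bb k) sums K"
      by (rule K_r[OF rr0(1) rr0(2)])
    thus "\<exists>K. ((\<lambda>t. t * (ln (1 + 2*rr n*cos (2*pi*t) + (rr n)^2) / 2)) has_integral K) {0..1/4}
                 \<and> (\<lambda>k. (rr n)^k * bb k) sums K" by blast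
  qed
  from choice[OF this] obtain Kf where Kf: "\<forall>n. ((\<lambda>t. t * (ln (1 + 2*rr n*cos (2*pi*t) + (rr n)^2) / 2)) has_integral Kf n) {0..1/4}
                 \<and> (\<lambda>k. (rr n)^k * bb k) sums Kf n" by blast
  have Kf1: "\<And>n. ((\<lambda>t. t * (ln (1 + 2*rr n*cos (2*pi*t) + (rr n)^2) / 2)) has_integral Kf n) {0..1/4}"
    using Kf by blast
  have Kf2: "\<And>n. (\<lambda>k. (rr n)^k * bb k) sums Kf n" using Kf by blast
  let ?f = "\<lambda>n t. t * (ln (1 + 2*rr n*cos (2*pi*t) + (rr n)^2) / 2)"
  let ?g = "\<lambda>t. t * (ln (2 + 2*cos (2*pi*t)) / 2)"
  have ul: "uniform_limit {0..1/4} ?f ?g sequentially"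
  proof (rule uniform_limitI)
    fix e :: real assume e: "e > 0"
    have "\<forall>\<^sub>F n in sequentially. 1 - rr n < e" using order_tendstoD(2)[OF rrlim e] .
    thus "\<forall>\<^sub>F n in sequentially. \<forall>t\<in>{0..1/4}. dist (?f n t) (?g t) < e"
    proof (rule eventually_mono)
      fix n assume n: "1 - rr n < e"
      show "\<forall>t\<in>{0..1/4}. dist (?f n t) (?g t) < e"
      proof
        fix t :: real assume t: "t \<in> {0..1/4}"
        have "dist (?f n t) (?g t) \<le> 1 - rr n"
          unfolding dist_real_def by (rule unif_bound[OF rr0(1) rr0(3) t])
        with n show "dist (?f n t) (?g t) < e" by linarith
      qed
    qed
  qed
  have cpos: "0 < 1 + 2*r*cos (2*pi*t) + r^2" if "t \<in> {0..1/4}" "0 \<le> r" for r t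
  proof -
    have "0 \<le> 2*pi*t" using that by simp
    moreover have "2*pi*t \<le> 2*pi*(1/4)" using that by (intro mult_left_mono) auto
    ultimately have "0 \<le> cos (2*pi*t)" using pi_gt_zero by (intro cos_ge_zero) linarith+
    hence "0 \<le> r * cos (2*pi*t)" using that by simp
    moreover have "0 \<le> r^2" by simp
    ultimately show ?thesis by linarith
  qed
  have cont: "continuous_on {0..1/4} (?f n)" for n
  proof -
    have ne: "\<forall>t\<in>{0..1/4}. 1 + 2*rr n*cos (2*pi*t) + (rr n)^2 \<noteq> 0"
      using cpos rr0(1)[of n] by (metis less_irrefl)
    show ?thesis by (intro continuous_intros ne) auto
  qed
  obtain I J where I: "\<And>n. (?f n has_integral I n) {0..1/4}"
     and J: "(?g has_integral J) {0..1/4}" and IJ: "I \<longlonglongrightarrow> J"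
    by (rule uniform_limit_integral[OF ul cont]) auto
  have "I n = Kf n" for n using I[of n] Kf1[of n] by (rule has_integral_unique)
  hence IK: "I = Kf" by (intro ext)
  have "(\<lambda>n. \<Sum>k. (rr n)^k * bb k) \<longlonglongrightarrow> (\<Sum>k. 1^k * bb k)"
    by (rule continuous_on_tendsto_compose[OF S_cont rr1]) (use rr0 in auto)
  moreover have "(\<Sum>k. (rr n)^k * bb k) = Kf n" for n using Kf2[of n] by (simp add: sums_iff)
  ultimately have "Kf \<longlonglongrightarrow> suminf bb" by simp
  hence "J = suminf bb" using IJ unfolding IK by (rule LIMSEQ_unique[rotated])
  with J show ?thesis by simp
qed


lemma J_value:
  assumes J: "((\<lambda>t. t * ln (cos (pi*t))) has_integral J) {0..1/4}"
  shows "J = catalan/(8*pi) - 21 * zeta 3/(128*pi^2) - ln 2/32"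
proof -
  have i1: "((\<lambda>t::real. t * ln 2) has_integral (ln 2 / 32)) {0..1/4}"
  proof -
    have "((\<lambda>t::real. t * ln 2) has_integral ((1/4)^2/2 * ln 2 - 0^2/2 * ln 2)) {0..1/4}"
    proof (rule fundamental_theorem_of_calculus)
      fix x :: real assume "x \<in> {0..1/4}"
      have "((\<lambda>t::real. t^2/2 * ln 2) has_real_derivative x * ln 2) (at x)"
        by (auto intro!: derivative_eq_intros)
      thus "((\<lambda>t::real. t^2/2 * ln 2) has_vector_derivative x * ln 2) (at x within {0..1/4})"
        unfolding has_real_derivative_iff_has_vector_derivative
        by (rule has_vector_derivative_at_within)
    qed simp
    thus ?thesis by (simp add: power2_eq_square)
  qed
  have i2: "((\<lambda>t::real. t * ln 2 + t * ln (cos (pi*t))) has_integral (ln 2 / 32 + J)) {0..1/4}"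
    by (rule has_integral_add[OF i1 J])
  have eq: "t * ln 2 + t * ln (cos (pi*t)) = t * (ln (2 + 2*cos (2*pi*t)) / 2)" if t: "t \<in> {0..1/4}" for t
  proof -
    have "pi * t \<le> pi * (1/4)" using t by (intro mult_left_mono) auto
    moreover have "0 \<le> pi * t" using t by simp
    ultimately have cp: "cos (pi*t) > 0" using pi_gt_zero by (intro cos_gt_zero_pi) linarith+
    have sq: "2 + 2*cos (2*pi*t) = (2 * cos (pi*t))^2"
      using cos_double_cos[of "pi*t"] by (simp add: power2_eq_square mult_ac)
    have "ln (2 + 2*cos (2*pi*t)) / 2 = ln ((2 * cos (pi*t))^2) / 2" by (simp only: sq)
    also have "\<dots> = ln (2 * cos (pi*t))" by (subst ln_realpow) simp
    also have "\<dots> = ln 2 + ln (cos (pi*t))" using cp by (simp add: ln_mult)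
    finally show ?thesis by (simp add: algebra_simps)
  qed
  have "((\<lambda>t. t * (ln (2 + 2*cos (2*pi*t)) / 2)) has_integral (ln 2 / 32 + J)) {0..1/4}"
    using i2 has_integral_cong[of "{0..1/4}" "\<lambda>t. t * ln 2 + t * ln (cos (pi*t))"
       "\<lambda>t. t * (ln (2 + 2*cos (2*pi*t)) / 2)", OF eq] by simp
  hence "suminf bb = ln 2 / 32 + J" using K1_value by (rule has_integral_unique[rotated])
  moreover have "suminf bb = catalan/(8*pi) - 21 * zeta 3/(128*pi^2)" using bb_sums by (simp add: sums_iff)
  ultimately show ?thesis by simp
qed


theorem corollary2p7:
  shows "zeta 3 = 4 * pi^2 / 21 * ln (exp (4 * catalan / pi) * multicos3 (1/4) ^ 16 / sqrt 2)"
proof -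
  obtain J where J1: "((\<lambda>t. t * ln (cos (pi*t))) has_integral J) {0..1/4}"
             and J2: "(\<lambda>k. Phi k (1/4)) sums J" by (rule J_sums)
  define L where "L = (1/4)^2 * ln (cos (pi/4)) - 2*J"
  have mc: "multicos3 (1/4) = exp L" unfolding L_def by (rule mc_value[OF J2])
  have Jv: "J = catalan/(8*pi) - 21 * zeta 3/(128*pi^2) - ln 2/32" by (rule J_value[OF J1])
  have lc: "ln (cos (pi/4)) = - ln 2 / 2"
    by (simp add: cos_45 ln_div ln_sqrt)
  have "ln (exp (4 * catalan / pi) * multicos3 (1/4) ^ 16 / sqrt 2) = 4 * catalan / pi + 16 * L - ln 2 / 2"
    unfolding mc by (simp add: ln_div ln_mult ln_sqrt flip: exp_of_nat_mult)
  also have "\<dots> = 21 * zeta 3 / (4 * pi^2)"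
    unfolding L_def lc Jv by (simp add: field_simps)
  finally show ?thesis by (simp add: field_simps)
qed

end
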